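(* For all $C_1,\dots,C_4\in\mathcal H$ and $t_1,\dots,t_4\in\mathbb R$, $$F_4(t_1,C_1;t_2,C_2;t_3,C_3;t_4,C_4)=M+F_2(t_1,C_1;t_2,C_2)\,F_2(t_3,C_3;t_4,C_4),$$ where $M=\langle a^*(t_2,C_2)a^*(t_1,C_1)\Phi_0\,|\,a^*(t_3,C_3)a^*(t_4,C_4)\Phi_0\rangle$ is given explicitly by $$M=\int_0^\infty\!\!\int_0^\infty\overline{c_2(w_2)}c_4(w_2)\,\overline{c_1(w_1)}c_3(w_1)\exp\Big(i(t_4-t_2e^{-w_1/2})E(w_2)+it_3e^{-w_2/2}E(w_1)-it_1E(w_1)\Big)\mathrm dw_2\,\mathrm dw_1$$ $$\;+\int_0^\infty\!\!\int_0^\infty\overline{c_2(w_2)}c_3(w_2)\,\overline{c_1(w_1)}c_4(w_1)\exp\Big(i(t_3-t_2)e^{-w_1/2}E(w_2)+i(t_4-t_1)E(w_1)\Big)\mathrm dw_2\,\mathrm dw_1 .$$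
   Context: One-particle space: $\mathcal H=L^2((0,\infty),\mathrm dw)$, a vector $C_j$ being identified with its mode function $c_j(w)$. $\mathcal F_s(\mathcal H)$ is the symmetric Fock space with vacuum $\Phi_0$; $n$-particle vectors are symmetric functions $v(w_1,\dots,w_n)$. $H_0$ acts on the $n$-particle sector as multiplication by $w_1+\dots+w_n$; $E(x)=2-2e^{-x/2}$, $H=E(H_0)$, $U(t)=e^{-itH}$. Annihilation/creation operators: $(a(\overline C)v)(w_1,\dots,w_{n-1})=\sqrt n\int\overline{c(w)}v(w,w_1,\dots)\mathrm dw$, $(a^*(C)v)(w_1,\dots,w_{n+1})=(n+1)^{-1/2}\sum_j c(w_j)v(w_1,\dots,\widehat{w_j},\dots,w_{n+1})$. Heisenberg operators $a^*(t,C)=U(t)^{-1}a^*(C)U(t)$, $\Upsilon(C)=a(\overline C)+a^*(C)$, $\Upsilon(t,C)=U(t)^{-1}\Upsilon(C)U(t)$. The $n$-point functions are $F_n(t_1,C_1;\dots;t_n,C_n)=\langle\Phi_0|\Upsilon(t_1,C_1)\cdots\Upsilon(t_n,C_n)\Phi_0\rangle$; in particular $F_2(t_1,C_1;t_2,C_2)=\int_0^\infty e^{i(t_2-t_1)E(w)}\overline{c_1(w)}c_2(w)\mathrm dw$. *)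

theory Defs
  imports "HOL-Analysis.Analysis"
begin

(* Fock space vectors: component n is the n-particle function, evaluated on
   lists ws of length n (values on other lengths are irrelevant). *)
type_synonym fock = "nat \<Rightarrow> real list \<Rightarrow> complex"

definition in_H :: "(real \<Rightarrow> complex) \<Rightarrow> bool" where
  "in_H c \<longleftrightarrow> c \<in> borel_measurable lborel \<and>
     set_integrable lborel {0<..} (\<lambda>w. (cmod (c w))\<^sup>2)"

definition E :: "real \<Rightarrow> real" where
  "E x = 2 - 2 * exp (- x / 2)"

(* U(t) = exp(-i t E(H0)); on the n-particle sector multiplication by
   exp(-i t E(w1+...+wn)) *)
definition U :: "real \<Rightarrow> fock \<Rightarrow> fock" where
  "U t v = (\<lambda>n ws. exp (- \<i> * complex_of_real (t * E (sum_list ws))) * v n ws)"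

definition ann :: "(real \<Rightarrow> complex) \<Rightarrow> fock \<Rightarrow> fock" where
  "ann c v = (\<lambda>n ws. complex_of_real (sqrt (real (Suc n))) *
      (LINT w:{0<..}|lborel. cnj (c w) * v (Suc n) (w # ws)))"

definition cre :: "(real \<Rightarrow> complex) \<Rightarrow> fock \<Rightarrow> fock" where
  "cre c v = (\<lambda>n ws. case n of 0 \<Rightarrow> 0
     | Suc m \<Rightarrow> complex_of_real (1 / sqrt (real (Suc m))) *
         (\<Sum>j<Suc m. c (ws ! j) * v m (take j ws @ drop (Suc j) ws)))"

definition vac :: fock where
  "vac = (\<lambda>n ws. if n = 0 then 1 else 0)"

definition Ups :: "(real \<Rightarrow> complex) \<Rightarrow> fock \<Rightarrow> fock" where
  "Ups c v = (\<lambda>n ws. ann c v n ws + cre c v n ws)"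

(* Heisenberg operators; U(t)^{-1} = U(-t) *)
definition cre_t :: "real \<Rightarrow> (real \<Rightarrow> complex) \<Rightarrow> fock \<Rightarrow> fock" where
  "cre_t t c v = U (- t) (cre c (U t v))"

definition Ups_t :: "real \<Rightarrow> (real \<Rightarrow> complex) \<Rightarrow> fock \<Rightarrow> fock" where
  "Ups_t t c v = U (- t) (Ups c (U t v))"

fun nint :: "nat \<Rightarrow> (real list \<Rightarrow> complex) \<Rightarrow> complex" where
  "nint 0 f = f []"
| "nint (Suc n) f = (LINT w:{0<..}|lborel. nint n (\<lambda>ws. f (w # ws)))"

(* Fock inner product, antilinear in the first argument *)
definition fock_inner :: "fock \<Rightarrow> fock \<Rightarrow> complex" where
  "fock_inner \<psi> \<phi> = (\<Sum>n. nint n (\<lambda>ws. cnj (\<psi> n ws) * \<phi> n ws))"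

definition Fn :: "(real \<times> (real \<Rightarrow> complex)) list \<Rightarrow> complex" where
  "Fn ps = fock_inner vac (foldr (\<lambda>(t, c) v. Ups_t t c v) ps vac)"

end

theory Submission
  imports Defs
begin


definition N :: "real measure" where "N = restrict_space lborel {0<..}"

lemma set_int_N: fixes f :: "real \<Rightarrow> complex" shows "set_lebesgue_integral lborel {0<..} f = integral\<^sup>L N f"
  unfolding N_def set_lebesgue_integral_def by (subst integral_restrict_space) auto

lemma sf_N: "sigma_finite_measure N"
  unfolding N_def by (rule sigma_finite_measure_restrict_space) (auto intro: lborel.sigma_finite_measure_axioms)

interpretation NN: pair_sigma_finite N N
  by (simp add: pair_sigma_finite_def sf_N)

lemma space_N[simp]: "space N = {0<..}" unfolding N_def by simp

lemma meas_N: "c \<in> borel_measurable lborel \<Longrightarrow> c \<in> borel_measurable N"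
  unfolding N_def by (rule measurable_restrict_space1) simp

lemma E_meas[measurable]: "E \<in> borel_measurable borel"
  unfolding E_def by measurable

lemma E_N[measurable]: "E \<in> borel_measurable N" by (rule meas_N) simp
lemma id_N[measurable]: "(\<lambda>x::real. x) \<in> borel_measurable N" by (rule meas_N) simp
lemma fst_N[measurable]: "(\<lambda>p. fst p) \<in> borel_measurable (N \<Otimes>\<^sub>M N)"
  using measurable_compose[OF measurable_fst id_N] by (simp add: space_pair_measure)
lemma snd_N[measurable]: "(\<lambda>p. snd p) \<in> borel_measurable (N \<Otimes>\<^sub>M N)"
  using measurable_compose[OF measurable_snd id_N] by (simp add: space_pair_measure)

lemma inH_meas: "in_H c \<Longrightarrow> c \<in> borel_measurable N"
  unfolding in_H_def by (auto intro: meas_N)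

lemma inH_sq: "in_H c \<Longrightarrow> integrable N (\<lambda>x. (cmod (c x))\<^sup>2)"
  unfolding in_H_def N_def set_integrable_def by (subst integrable_restrict_space) auto

lemma L1: assumes "in_H c" "in_H d" shows "integrable N (\<lambda>x. cmod (c x) * cmod (d x))"
proof (rule Bochner_Integration.integrable_bound)
  show "integrable N (\<lambda>x. (cmod (c x))\<^sup>2 + (cmod (d x))\<^sup>2)"
    using inH_sq[OF assms(1)] inH_sq[OF assms(2)] by auto
  have [measurable]: "c \<in> borel_measurable N" "d \<in> borel_measurable N" using assms by (auto intro: inH_meas)
  show "(\<lambda>x. cmod (c x) * cmod (d x)) \<in> borel_measurable N" by measurable
  show "AE x in N. norm (cmod (c x) * cmod (d x)) \<le> norm ((cmod (c x))\<^sup>2 + (cmod (d x))\<^sup>2)"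
  proof (intro AE_I2)
    fix x
    have "2 * (cmod (c x) * cmod (d x)) \<le> (cmod (c x))\<^sup>2 + (cmod (d x))\<^sup>2"
      using sum_squares_bound[of "cmod (c x)" "cmod (d x)"] by (simp add: power2_eq_square)
    then have "cmod (c x) * cmod (d x) \<le> (cmod (c x))\<^sup>2 + (cmod (d x))\<^sup>2"
      using mult_nonneg_nonneg[OF norm_ge_zero norm_ge_zero, of "c x" "d x"] by linarith
    then show "norm (cmod (c x) * cmod (d x)) \<le> norm ((cmod (c x))\<^sup>2 + (cmod (d x))\<^sup>2)"
      by simp
  qed
qed

lemma prod_int:
  fixes f g :: "real \<Rightarrow> real"
  assumes f: "integrable N f" and g: "integrable N g"
  shows "integrable (N \<Otimes>\<^sub>M N) (\<lambda>(x,y). f x * g y)"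
proof (rule NN.Fubini_integrable)
  have [measurable]: "f \<in> borel_measurable N" "g \<in> borel_measurable N" using f g by auto
  show "(\<lambda>(x,y). f x * g y) \<in> borel_measurable (N \<Otimes>\<^sub>M N)" by measurable
  have "integrable N (\<lambda>x. norm (f x) * (LINT y|N. norm (g y)))"
    using f by (intro integrable_mult_left) auto
  then show "integrable N (\<lambda>x. LINT y|N. norm (case (x, y) of (x, y) \<Rightarrow> f x * g y))"
    by (simp add: abs_mult)
  show "AE x in N. integrable N (\<lambda>y. case (x, y) of (x, y) \<Rightarrow> f x * g y)"
    using g by auto
qed

definition G :: "(real \<Rightarrow> complex) \<Rightarrow> (real \<Rightarrow> complex) \<Rightarrow> real \<Rightarrow> real \<Rightarrow> real \<Rightarrow> real \<Rightarrow> complex" where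
  "G c d s t x y = c x * d y * exp (\<i> * complex_of_real (s * exp (- y / 2) * E x + t * E y))"

lemma norm_G: "norm (G c d s t x y) = cmod (c x) * cmod (d y)"
  unfolding G_def by (simp add: norm_mult)

lemma G_meas[measurable]:
  assumes [measurable]: "c \<in> borel_measurable N" "d \<in> borel_measurable N"
  shows "(\<lambda>(x,y). G c d s t x y) \<in> borel_measurable (N \<Otimes>\<^sub>M N)"
        "(\<lambda>(x,y). G c d s t y x) \<in> borel_measurable (N \<Otimes>\<^sub>M N)"
  unfolding G_def by measurable

lemma GG_int:
  assumes h: "in_H a" "in_H b" "in_H c" "in_H d"
  shows "integrable (N \<Otimes>\<^sub>M N) (\<lambda>(x,y). cnj (G a b s t y x) * G c d s' t' x y)"
    and "integrable (N \<Otimes>\<^sub>M N) (\<lambda>(x,y). cnj (G a b s t y x) * G c d s' t' y x)"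
proof -
  have [measurable]: "a \<in> borel_measurable N" "b \<in> borel_measurable N"
     "c \<in> borel_measurable N" "d \<in> borel_measurable N" using h by (auto intro: inH_meas)
  have m1: "(\<lambda>p. G a b s t (snd p) (fst p)) \<in> borel_measurable (N \<Otimes>\<^sub>M N)"
     "(\<lambda>p. G c d s' t' (fst p) (snd p)) \<in> borel_measurable (N \<Otimes>\<^sub>M N)"
     "(\<lambda>p. G c d s' t' (snd p) (fst p)) \<in> borel_measurable (N \<Otimes>\<^sub>M N)"
    using G_meas[of a b s t] G_meas[of c d s' t'] by (simp_all add: split_beta')
  have cm: "cnj \<in> borel_measurable borel" by (rule borel_measurable_continuous_onI) (intro continuous_intros)
  show "integrable (N \<Otimes>\<^sub>M N) (\<lambda>(x,y). cnj (G a b s t y x) * G c d s' t' x y)"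
  proof (rule Bochner_Integration.integrable_bound)
    show "integrable (N \<Otimes>\<^sub>M N) (\<lambda>(x,y). (cmod (b x) * cmod (c x)) * (cmod (a y) * cmod (d y)))"
      by (rule prod_int) (auto intro: L1 h)
    show "(\<lambda>(x,y). cnj (G a b s t y x) * G c d s' t' x y) \<in> borel_measurable (N \<Otimes>\<^sub>M N)"
      by (simp add: split_beta') (intro borel_measurable_times m1 measurable_compose[OF m1(1) cm])
    show "AE p in N \<Otimes>\<^sub>M N. norm ((\<lambda>(x,y). cnj (G a b s t y x) * G c d s' t' x y) p)
       \<le> norm ((\<lambda>(x,y). (cmod (b x) * cmod (c x)) * (cmod (a y) * cmod (d y))) p)"
      by (intro AE_I2) (auto simp: norm_mult norm_G)
  qed
  show "integrable (N \<Otimes>\<^sub>M N) (\<lambda>(x,y). cnj (G a b s t y x) * G c d s' t' y x)"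
  proof (rule Bochner_Integration.integrable_bound)
    show "integrable (N \<Otimes>\<^sub>M N) (\<lambda>(x,y). (cmod (b x) * cmod (d x)) * (cmod (a y) * cmod (c y)))"
      by (rule prod_int) (auto intro: L1 h)
    show "(\<lambda>(x,y). cnj (G a b s t y x) * G c d s' t' y x) \<in> borel_measurable (N \<Otimes>\<^sub>M N)"
      by (simp add: split_beta') (intro borel_measurable_times m1 measurable_compose[OF m1(1) cm])
    show "AE p in N \<Otimes>\<^sub>M N. norm ((\<lambda>(x,y). cnj (G a b s t y x) * G c d s' t' y x) p)
       \<le> norm ((\<lambda>(x,y). (cmod (b x) * cmod (d x)) * (cmod (a y) * cmod (c y))) p)"
      by (intro AE_I2) (auto simp: norm_mult norm_G)
  qed
qed

lemma sym_int:
  fixes f :: "real \<Rightarrow> real \<Rightarrow> complex"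
  assumes f: "integrable (N \<Otimes>\<^sub>M N) (\<lambda>(x,y). f x y)"
  shows "(LINT x|N. LINT y|N. (f x y + f y x) / 2) = (LINT x|N. LINT y|N. f x y)"
proof -
  have fs: "integrable (N \<Otimes>\<^sub>M N) (\<lambda>(x,y). f y x)"
    using NN.integrable_product_swap[OF f] by simp
  have fm: "(\<lambda>(x,y). f x y) \<in> borel_measurable (N \<Otimes>\<^sub>M N)" using f by auto
  have h: "integrable (N \<Otimes>\<^sub>M N) (\<lambda>(x,y). (f x y + f y x) / 2)"
    using integrable_divide[OF Bochner_Integration.integrable_add[OF f fs], of 2]
    by (simp add: split_beta')
  have "(LINT x|N. LINT y|N. (f x y + f y x) / 2) = integral\<^sup>L (N \<Otimes>\<^sub>M N) (\<lambda>(x,y). (f x y + f y x) / 2)"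
    using NN.integral_fst[of "\<lambda>x y. (f x y + f y x) / 2"] h by simp
  also have "\<dots> = (integral\<^sup>L (N \<Otimes>\<^sub>M N) (\<lambda>(x,y). f x y) + integral\<^sup>L (N \<Otimes>\<^sub>M N) (\<lambda>(x,y). f y x)) / 2"
    using Bochner_Integration.integral_add[OF f fs]
    by (simp add: split_beta' add_divide_distrib[symmetric])
  also have "integral\<^sup>L (N \<Otimes>\<^sub>M N) (\<lambda>(x,y). f y x) = integral\<^sup>L (N \<Otimes>\<^sub>M N) (\<lambda>(x,y). f x y)"
    using NN.integral_product_swap[OF fm] by simp
  also have "(integral\<^sup>L (N \<Otimes>\<^sub>M N) (\<lambda>(x,y). f x y) + integral\<^sup>L (N \<Otimes>\<^sub>M N) (\<lambda>(x,y). f x y)) / 2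
      = integral\<^sup>L (N \<Otimes>\<^sub>M N) (\<lambda>(x,y). f x y)" by simp
  also have "\<dots> = (LINT x|N. LINT y|N. f x y)"
    using NN.integral_fst[OF f] by simp
  finally show ?thesis .
qed

lemma split_int:
  fixes f g :: "real \<Rightarrow> real \<Rightarrow> complex"
  assumes f: "integrable (N \<Otimes>\<^sub>M N) (\<lambda>(x,y). f x y)"
      and g: "integrable (N \<Otimes>\<^sub>M N) (\<lambda>(x,y). g x y)"
  shows "(LINT x|N. LINT y|N. f x y + g x y) = (LINT x|N. LINT y|N. f x y) + (LINT x|N. LINT y|N. g x y)"
proof -
  have fg: "integrable (N \<Otimes>\<^sub>M N) (\<lambda>(x,y). f x y + g x y)"
    using Bochner_Integration.integrable_add[OF f g] by (simp add: split_beta')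
  show ?thesis
    using NN.integral_fst[OF f] NN.integral_fst[OF g] NN.integral_fst[OF fg]
      Bochner_Integration.integral_add[OF f g] by (simp add: split_beta')
qed



lemma E_add: "E (x + y) = E y + exp (- y / 2) * E x"
proof -
  have "exp (- (x + y) / 2) = exp (- y / 2) * exp (- x / 2)"
    by (simp add: exp_add[symmetric] field_simps)
  then show ?thesis unfolding E_def by (simp add: algebra_simps)
qed

lemma E0[simp]: "E 0 = 0" unfolding E_def by simp

lemma vac0[simp]: "vac 0 ws = 1" and vacS[simp]: "vac (Suc n) ws = 0"
  unfolding vac_def by auto

lemma U_app: "U t v n ws = exp (- \<i> * complex_of_real (t * E (sum_list ws))) * v n ws"
  unfolding U_def by simp

lemma ann_vac: "ann c (U t vac) n ws = 0"
  unfolding ann_def U_def by simp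

lemma cre0[simp]: "cre c v 0 ws = 0" unfolding cre_def by simp

lemma cre_zero:
  assumes "\<And>m ws. m \<noteq> k \<Longrightarrow> v m ws = 0" "n \<noteq> Suc k"
  shows "cre c v n ws = 0"
proof (cases n)
  case (Suc m)
  then have "m \<noteq> k" using assms(2) by simp
  then show ?thesis using assms(1) Suc unfolding cre_def by simp
qed simp

lemma cre_t_zero:
  assumes "\<And>m ws. m \<noteq> k \<Longrightarrow> v m ws = 0" "n \<noteq> Suc k"
  shows "cre_t t c v n ws = 0"
proof -
  have "\<And>m ws. m \<noteq> k \<Longrightarrow> U t v m ws = 0" using assms(1) by (simp add: U_app)
  then show ?thesis unfolding cre_t_def using cre_zero[OF _ assms(2)] by (simp add: U_app)
qed

lemma vac_zero: "m \<noteq> 0 \<Longrightarrow> vac m ws = 0" by (cases m) auto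

lemma psi1_zero: "n \<noteq> 1 \<Longrightarrow> cre_t t d vac n ws = 0"
  by (rule cre_t_zero[where k=0]) (auto intro: vac_zero)

lemma psi2_zero: "n \<noteq> 2 \<Longrightarrow> cre_t s c (cre_t t d vac) n ws = 0"
  by (rule cre_t_zero[where k=1]) (auto intro: psi1_zero)

lemma psi1: "cre_t t d vac 1 [x] = d x * exp (\<i> * complex_of_real (t * E x))"
  unfolding cre_t_def by (simp add: U_app cre_def mult.commute)

lemma psi2: "cre_t s c (cre_t t d vac) 2 [x, y]
   = complex_of_real (1 / sqrt 2) * (G c d s t x y + G c d s t y x)"
proof -
  have e: "exp (\<i> * complex_of_real (s * E (x + y))) * exp (- (\<i> * complex_of_real (s * E y))) * exp (\<i> * complex_of_real (t * E y))
      = exp (\<i> * complex_of_real (s * exp (- y / 2) * E x + t * E y))" for x y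
  proof -
    have "exp (\<i> * complex_of_real (s * E (x + y))) * exp (- (\<i> * complex_of_real (s * E y))) * exp (\<i> * complex_of_real (t * E y))
       = exp (\<i> * complex_of_real (s * E (x + y)) + - (\<i> * complex_of_real (s * E y)) + \<i> * complex_of_real (t * E y))"
      by (simp only: exp_add)
    also have "\<i> * complex_of_real (s * E (x + y)) + - (\<i> * complex_of_real (s * E y)) + \<i> * complex_of_real (t * E y)
       = \<i> * complex_of_real (s * exp (- y / 2) * E x + t * E y)"
      by (simp add: E_add algebra_simps)
    finally show ?thesis .
  qed
  have "cre_t s c (cre_t t d vac) 2 [x, y] = exp (\<i> * complex_of_real (s * E (x + y))) * (complex_of_real (1 / sqrt 2) *
     (c x * (exp (- (\<i> * complex_of_real (s * E y))) * (d y * exp (\<i> * complex_of_real (t * E y))))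
    + c y * (exp (- (\<i> * complex_of_real (s * E x))) * (d x * exp (\<i> * complex_of_real (t * E x))))))"
    apply (subst cre_t_def) apply (simp add: U_app cre_def numeral_2_eq_2)
    using psi1[of t d x] psi1[of t d y] by (simp add: U_app)
  also have "\<dots> = complex_of_real (1 / sqrt 2) * (G c d s t x y + G c d s t y x)"
    unfolding G_def using e[of x y] e[of y x] by (simp add: algebra_simps add.commute)
  finally show ?thesis .
qed



lemma cnj_meas[measurable (raw)]:
  "f \<in> borel_measurable M \<Longrightarrow> (\<lambda>x. cnj (f x)) \<in> borel_measurable M"
proof -
  have cm: "cnj \<in> borel_measurable borel" by (rule borel_measurable_continuous_onI) (intro continuous_intros)
  assume "f \<in> borel_measurable M" then show ?thesis using measurable_compose[OF _ cm] by blast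
qed

lemma nint_zero: "nint n (\<lambda>_. 0) = 0"
  by (induction n) auto

lemma fock2:
  assumes "\<And>n ws. n \<noteq> 2 \<Longrightarrow> \<psi> n ws = 0"
  shows "fock_inner \<psi> \<phi> = (LINT x|N. LINT y|N. cnj (\<psi> 2 [x, y]) * \<phi> 2 [x, y])"
proof -
  have eq: "(\<lambda>n. nint n (\<lambda>ws. cnj (\<psi> n ws) * \<phi> n ws)) = (\<lambda>r. if r = 2 then nint r (\<lambda>ws. cnj (\<psi> r ws) * \<phi> r ws) else 0)"
    using assms by (intro ext) (auto simp: nint_zero)
  have "(\<lambda>n. nint n (\<lambda>ws. cnj (\<psi> n ws) * \<phi> n ws)) sums nint 2 (\<lambda>ws. cnj (\<psi> 2 ws) * \<phi> 2 ws)"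
    unfolding eq by (rule sums_single)
  then have "fock_inner \<psi> \<phi> = nint 2 (\<lambda>ws. cnj (\<psi> 2 ws) * \<phi> 2 ws)"
    unfolding fock_inner_def by (rule sums_unique[symmetric])
  then show ?thesis by (simp add: numeral_2_eq_2 set_int_N)
qed

lemma fock_vac: "fock_inner vac X = X 0 []"
proof -
  have eq: "(\<lambda>n. nint n (\<lambda>ws. cnj (vac n ws) * X n ws)) = (\<lambda>r. if r = 0 then nint r (\<lambda>ws. cnj (vac r ws) * X r ws) else 0)"
    by (intro ext) (auto simp: nint_zero vac_zero)
  have "(\<lambda>n. nint n (\<lambda>ws. cnj (vac n ws) * X n ws)) sums nint 0 (\<lambda>ws. cnj (vac 0 ws) * X 0 ws)"
    unfolding eq by (rule sums_single)
  then show ?thesis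
    unfolding fock_inner_def by (simp add: sums_unique[symmetric])
qed

lemma Ups_t_app: "Ups_t t c v n ws = exp (\<i> * complex_of_real (t * E (sum_list ws))) * ann c (U t v) n ws + cre_t t c v n ws"
  unfolding Ups_t_def Ups_def cre_t_def by (simp add: U_app algebra_simps)

lemma Ups_vac: "Ups_t t c vac = cre_t t c vac"
  by (intro ext) (simp add: Ups_t_app ann_vac)

lemma cexp: "cnj (exp (\<i> * complex_of_real a)) * exp (\<i> * complex_of_real b) = exp (\<i> * complex_of_real (b - a))"
proof -
  have "cnj (exp (\<i> * complex_of_real a)) = exp (- (\<i> * complex_of_real a))" by (simp only: exp_cnj) simp
  also have "exp (- (\<i> * complex_of_real a)) * exp (\<i> * complex_of_real b) = exp (- (\<i> * complex_of_real a) + \<i> * complex_of_real b)"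
    by (simp only: exp_add)
  also have "- (\<i> * complex_of_real a) + \<i> * complex_of_real b = \<i> * complex_of_real (b - a)"
    by (simp add: algebra_simps)
  finally show ?thesis .
qed

lemma sqrt2: "complex_of_real (1 / sqrt 2) * complex_of_real (1 / sqrt 2) = 1 / 2"
  by (simp flip: of_real_mult)



lemma Z2: "Ups_t t3 c3 (cre_t t4 c4 vac) 2 [x, y] = complex_of_real (1 / sqrt 2) * (G c3 c4 t3 t4 x y + G c3 c4 t3 t4 y x)"
proof -
  have "ann c3 (U t3 (cre_t t4 c4 vac)) 2 [x, y] = 0"
    unfolding ann_def by (simp add: U_app psi1_zero)
  then show ?thesis by (simp add: Ups_t_app psi2)
qed

lemma Z0: "Ups_t t3 c3 (cre_t t4 c4 vac) 0 [] = ann c3 (U t3 (cre_t t4 c4 vac)) 0 []"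
  by (simp add: Ups_t_app cre_t_def U_app)

lemma Y1: "Ups_t t2 c2 Z (Suc 0) [w] =
   exp (\<i> * complex_of_real (t2 * E w)) * (complex_of_real (sqrt 2) *
     (LINT y|N. cnj (c2 y) * (exp (- (\<i> * complex_of_real (t2 * E (y + w)))) * Z 2 [y, w])))
 + exp (\<i> * complex_of_real (t2 * E w)) * (c2 w * Z 0 [])"
  by (simp add: Ups_t_app ann_def cre_t_def cre_def U_app set_int_N numeral_2_eq_2)

lemma X0: "Ups_t t1 c1 Y 0 [] = (LINT w|N. cnj (c1 w) * (exp (- (\<i> * complex_of_real (t1 * E w))) * Y (Suc 0) [w]))"
  by (simp add: Ups_t_app ann_def cre_t_def U_app set_int_N)



definition Kf where
  "Kf c1 c2 c3 c4 t1 t2 t3 t4 x y = cnj (G c2 c1 t2 t1 y x) * (G c3 c4 t3 t4 x y + G c3 c4 t3 t4 y x)"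

lemma K_int:
  assumes "in_H c1" "in_H c2" "in_H c3" "in_H c4"
  shows "integrable (N \<Otimes>\<^sub>M N) (\<lambda>(x,y). Kf c1 c2 c3 c4 t1 t2 t3 t4 x y)"
  using Bochner_Integration.integrable_add[OF GG_int(1)[of c2 c1 c3 c4 t2 t1 t3 t4] GG_int(2)[of c2 c1 c3 c4 t2 t1 t3 t4]] assms
  by (simp add: Kf_def split_beta' distrib_left)

lemma KM:
  assumes "in_H c1" "in_H c2" "in_H c3" "in_H c4"
  shows "(LINT x|N. LINT y|N. Kf c1 c2 c3 c4 t1 t2 t3 t4 x y) =
     (LINT w1:{0<..}|lborel. LINT w2:{0<..}|lborel.
        cnj (c2 w2) * c4 w2 * cnj (c1 w1) * c3 w1 *
        exp (\<i> * complex_of_real ((t4 - t2 * exp (- w1 / 2)) * E w2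
                 + t3 * exp (- w2 / 2) * E w1 - t1 * E w1)))
   + (LINT w1:{0<..}|lborel. LINT w2:{0<..}|lborel.
        cnj (c2 w2) * c3 w2 * cnj (c1 w1) * c4 w1 *
        exp (\<i> * complex_of_real ((t3 - t2) * exp (- w1 / 2) * E w2
                 + (t4 - t1) * E w1)))"
proof -
  have p1: "cnj (G c2 c1 t2 t1 y x) * G c3 c4 t3 t4 x y =
     cnj (c2 y) * c4 y * cnj (c1 x) * c3 x *
        exp (\<i> * complex_of_real ((t4 - t2 * exp (- x / 2)) * E y
                 + t3 * exp (- y / 2) * E x - t1 * E x))" for x y
  proof -
    have e: "cnj (exp (\<i> * complex_of_real (t2 * exp (- x / 2) * E y + t1 * E x))) * exp (\<i> * complex_of_real (t3 * exp (- y / 2) * E x + t4 * E y))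
      = exp (\<i> * complex_of_real ((t4 - t2 * exp (- x / 2)) * E y + t3 * exp (- y / 2) * E x - t1 * E x))"
      unfolding cexp by (rule arg_cong[where f="\<lambda>r. exp (\<i> * complex_of_real r)"]) (simp add: algebra_simps)
    have "cnj (G c2 c1 t2 t1 y x) * G c3 c4 t3 t4 x y = (cnj (c2 y) * c4 y * cnj (c1 x) * c3 x) *
       (cnj (exp (\<i> * complex_of_real (t2 * exp (- x / 2) * E y + t1 * E x))) * exp (\<i> * complex_of_real (t3 * exp (- y / 2) * E x + t4 * E y)))"
      unfolding G_def by (simp only: complex_cnj_mult mult_ac)
    then show ?thesis using e by simp
  qed
  have p2: "cnj (G c2 c1 t2 t1 y x) * G c3 c4 t3 t4 y x =
     cnj (c2 y) * c3 y * cnj (c1 x) * c4 x *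
        exp (\<i> * complex_of_real ((t3 - t2) * exp (- x / 2) * E y + (t4 - t1) * E x))" for x y
  proof -
    have e: "cnj (exp (\<i> * complex_of_real (t2 * exp (- x / 2) * E y + t1 * E x))) * exp (\<i> * complex_of_real (t3 * exp (- x / 2) * E y + t4 * E x))
      = exp (\<i> * complex_of_real ((t3 - t2) * exp (- x / 2) * E y + (t4 - t1) * E x))"
      unfolding cexp by (rule arg_cong[where f="\<lambda>r. exp (\<i> * complex_of_real r)"]) (simp add: algebra_simps)
    have "cnj (G c2 c1 t2 t1 y x) * G c3 c4 t3 t4 y x = (cnj (c2 y) * c3 y * cnj (c1 x) * c4 x) *
       (cnj (exp (\<i> * complex_of_real (t2 * exp (- x / 2) * E y + t1 * E x))) * exp (\<i> * complex_of_real (t3 * exp (- x / 2) * E y + t4 * E x)))"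
      unfolding G_def by (simp only: complex_cnj_mult mult_ac)
    then show ?thesis using e by simp
  qed
  have "(LINT x|N. LINT y|N. Kf c1 c2 c3 c4 t1 t2 t3 t4 x y) =
     (LINT x|N. LINT y|N. cnj (G c2 c1 t2 t1 y x) * G c3 c4 t3 t4 x y + cnj (G c2 c1 t2 t1 y x) * G c3 c4 t3 t4 y x)"
    by (simp add: Kf_def distrib_left)
  also have "\<dots> = (LINT x|N. LINT y|N. cnj (G c2 c1 t2 t1 y x) * G c3 c4 t3 t4 x y) + (LINT x|N. LINT y|N. cnj (G c2 c1 t2 t1 y x) * G c3 c4 t3 t4 y x)"
    by (rule split_int) (use GG_int assms in auto)
  finally show ?thesis by (simp only: p1 p2 set_int_N)
qed



lemma f12_int:
  assumes "in_H c1" "in_H c2"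
  shows "integrable N (\<lambda>w. cnj (c1 w) * (exp (- (\<i> * complex_of_real (t1 * E w))) * (c2 w * exp (\<i> * complex_of_real (t2 * E w)))))"
proof (rule Bochner_Integration.integrable_bound)
  have [measurable]: "c1 \<in> borel_measurable N" "c2 \<in> borel_measurable N" using assms by (auto intro: inH_meas)
  show "integrable N (\<lambda>x. cmod (c1 x) * cmod (c2 x))" using L1 assms by blast
  show "(\<lambda>w. cnj (c1 w) * (exp (- (\<i> * complex_of_real (t1 * E w))) * (c2 w * exp (\<i> * complex_of_real (t2 * E w))))) \<in> borel_measurable N"
    by measurable
  show "AE x in N. norm (cnj (c1 x) * (exp (- (\<i> * complex_of_real (t1 * E x))) * (c2 x * exp (\<i> * complex_of_real (t2 * E x)))))
     \<le> norm (cmod (c1 x) * cmod (c2 x))"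
  proof (intro AE_I2)
    fix x
    have "norm (exp (- (\<i> * complex_of_real (t1 * E x)))) = 1"
      using norm_exp_i_times[of "- (t1 * E x)"] by simp
    then show "norm (cnj (c1 x) * (exp (- (\<i> * complex_of_real (t1 * E x))) * (c2 x * exp (\<i> * complex_of_real (t2 * E x)))))
     \<le> norm (cmod (c1 x) * cmod (c2 x))" by (simp add: norm_mult)
  qed
qed

lemma Fn12: "Fn [(t1, c1), (t2, c2)] = (LINT w|N. cnj (c1 w) * (exp (- (\<i> * complex_of_real (t1 * E w))) * (c2 w * exp (\<i> * complex_of_real (t2 * E w)))))"
  using psi1[of t2 c2] by (simp add: Fn_def fock_vac Ups_vac X0)

lemma Fn4:
  assumes "in_H c1" "in_H c2" "in_H c3" "in_H c4"
  shows "Fn [(t1, c1), (t2, c2), (t3, c3), (t4, c4)] = (LINT x|N. LINT y|N. Kf c1 c2 c3 c4 t1 t2 t3 t4 x y)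
     + Fn [(t1, c1), (t2, c2)] * Fn [(t3, c3), (t4, c4)]"
proof -
  define Z where "Z = Ups_t t3 c3 (cre_t t4 c4 vac)"
  have F34: "Fn [(t3, c3), (t4, c4)] = Z 0 []" by (simp add: Fn_def fock_vac Ups_vac Z_def)
  define f12 where "f12 w = cnj (c1 w) * (exp (- (\<i> * complex_of_real (t1 * E w))) * (c2 w * exp (\<i> * complex_of_real (t2 * E w))))" for w
  have F12: "Fn [(t1, c1), (t2, c2)] = (LINT w|N. f12 w)" unfolding f12_def by (rule Fn12)
  have "Fn [(t1, c1), (t2, c2), (t3, c3), (t4, c4)] = Ups_t t1 c1 (Ups_t t2 c2 Z) 0 []"
    by (simp add: Fn_def fock_vac Ups_vac Z_def)
  also have "\<dots> = (LINT w|N. (LINT y|N. Kf c1 c2 c3 c4 t1 t2 t3 t4 w y) + f12 w * Z 0 [])"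
  proof (unfold X0 Y1, rule Bochner_Integration.integral_cong[OF refl])
    fix w
    have Z2': "Z 2 [y, w] = complex_of_real (1 / sqrt 2) * (G c3 c4 t3 t4 y w + G c3 c4 t3 t4 w y)" for y
      unfolding Z_def by (rule Z2)
    have ee: "exp (- (\<i> * complex_of_real (t1 * E w))) * exp (\<i> * complex_of_real (t2 * E w)) * exp (- (\<i> * complex_of_real (t2 * E (y + w))))
       = cnj (exp (\<i> * complex_of_real (t2 * exp (- w / 2) * E y + t1 * E w)))" for y
    proof -
      have "exp (- (\<i> * complex_of_real (t1 * E w))) * exp (\<i> * complex_of_real (t2 * E w)) * exp (- (\<i> * complex_of_real (t2 * E (y + w))))
         = exp (- (\<i> * complex_of_real (t1 * E w)) + \<i> * complex_of_real (t2 * E w) + - (\<i> * complex_of_real (t2 * E (y + w))))"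
        by (simp only: exp_add)
      also have "\<dots> = exp (cnj (\<i> * complex_of_real (t2 * exp (- w / 2) * E y + t1 * E w)))"
        by (rule arg_cong[where f=exp]) (unfold E_add, simp add: algebra_simps)
      finally show ?thesis by (simp only: exp_cnj)
    qed
    have s2: "complex_of_real (sqrt 2) * complex_of_real (1 / sqrt 2) = 1"
      by (simp flip: of_real_mult)
    have pw: "Kf c1 c2 c3 c4 t1 t2 t3 t4 w y =
      (cnj (c1 w) * exp (- (\<i> * complex_of_real (t1 * E w))) * exp (\<i> * complex_of_real (t2 * E w)) * complex_of_real (sqrt 2)) *
      (cnj (c2 y) * (exp (- (\<i> * complex_of_real (t2 * E (y + w)))) * Z 2 [y, w]))" for y
    proof -
      have "(cnj (c1 w) * exp (- (\<i> * complex_of_real (t1 * E w))) * exp (\<i> * complex_of_real (t2 * E w)) * complex_of_real (sqrt 2)) *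
      (cnj (c2 y) * (exp (- (\<i> * complex_of_real (t2 * E (y + w)))) * Z 2 [y, w]))
       = (cnj (c2 y) * cnj (c1 w)) * (exp (- (\<i> * complex_of_real (t1 * E w))) * exp (\<i> * complex_of_real (t2 * E w)) * exp (- (\<i> * complex_of_real (t2 * E (y + w)))))
         * (complex_of_real (sqrt 2) * complex_of_real (1 / sqrt 2)) * (G c3 c4 t3 t4 y w + G c3 c4 t3 t4 w y)"
        unfolding Z2' by (simp only: mult_ac)
      also have "\<dots> = Kf c1 c2 c3 c4 t1 t2 t3 t4 w y"
        unfolding ee s2 Kf_def G_def by (simp add: mult_ac add.commute)
      finally show ?thesis by simp
    qed
    show "cnj (c1 w) * (exp (- (\<i> * complex_of_real (t1 * E w))) *
          (exp (\<i> * complex_of_real (t2 * E w)) * (complex_of_real (sqrt 2) *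
            (LINT y|N. cnj (c2 y) * (exp (- (\<i> * complex_of_real (t2 * E (y + w)))) * Z 2 [y, w])))
          + exp (\<i> * complex_of_real (t2 * E w)) * (c2 w * Z 0 [])))
        = (LINT y|N. Kf c1 c2 c3 c4 t1 t2 t3 t4 w y) + f12 w * Z 0 []"
      unfolding pw integral_mult_right_zero f12_def by (simp add: algebra_simps)
  qed
  also have "\<dots> = (LINT w|N. LINT y|N. Kf c1 c2 c3 c4 t1 t2 t3 t4 w y) + (LINT w|N. f12 w * Z 0 [])"
  proof (rule Bochner_Integration.integral_add)
    show "integrable N (\<lambda>w. LINT y|N. Kf c1 c2 c3 c4 t1 t2 t3 t4 w y)"
      using NN.integrable_fst[OF K_int[OF assms(1-4)]] by simp
    show "integrable N (\<lambda>w. f12 w * Z 0 [])"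
      unfolding f12_def by (intro integrable_mult_left f12_int assms)
  qed
  also have "(LINT w|N. f12 w * Z 0 []) = Fn [(t1, c1), (t2, c2)] * Fn [(t3, c3), (t4, c4)]"
    by (simp add: F12 F34)
  finally show ?thesis .
qed

lemma first_conj:
  assumes "in_H c1" "in_H c2" "in_H c3" "in_H c4"
  shows "fock_inner (cre_t t2 c2 (cre_t t1 c1 vac)) (cre_t t3 c3 (cre_t t4 c4 vac))
    = (LINT x|N. LINT y|N. Kf c1 c2 c3 c4 t1 t2 t3 t4 x y)"
proof -
  have pw: "cnj (cre_t t2 c2 (cre_t t1 c1 vac) 2 [x, y]) * cre_t t3 c3 (cre_t t4 c4 vac) 2 [x, y] =
        (Kf c1 c2 c3 c4 t1 t2 t3 t4 x y + Kf c1 c2 c3 c4 t1 t2 t3 t4 y x) / 2" for x y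
    using sqrt2 unfolding Kf_def psi2 by (simp add: algebra_simps)
  have "fock_inner (cre_t t2 c2 (cre_t t1 c1 vac)) (cre_t t3 c3 (cre_t t4 c4 vac))
    = (LINT x|N. LINT y|N. cnj (cre_t t2 c2 (cre_t t1 c1 vac) 2 [x, y]) * cre_t t3 c3 (cre_t t4 c4 vac) 2 [x, y])"
    by (rule fock2) (rule psi2_zero)
  also have "\<dots> = (LINT x|N. LINT y|N. (Kf c1 c2 c3 c4 t1 t2 t3 t4 x y + Kf c1 c2 c3 c4 t1 t2 t3 t4 y x) / 2)"
    by (simp only: pw)
  also have "\<dots> = (LINT x|N. LINT y|N. Kf c1 c2 c3 c4 t1 t2 t3 t4 x y)"
    by (rule sym_int[OF K_int[OF assms(1-4)]])
  finally show ?thesis .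
qed


theorem mainTheorem7:
  fixes c1 c2 c3 c4 :: "real \<Rightarrow> complex" and t1 t2 t3 t4 :: real
  assumes "in_H c1" "in_H c2" "in_H c3" "in_H c4"
  defines "M \<equiv>
     (LINT w1:{0<..}|lborel. LINT w2:{0<..}|lborel.
        cnj (c2 w2) * c4 w2 * cnj (c1 w1) * c3 w1 *
        exp (\<i> * complex_of_real ((t4 - t2 * exp (- w1 / 2)) * E w2
                 + t3 * exp (- w2 / 2) * E w1 - t1 * E w1)))
   + (LINT w1:{0<..}|lborel. LINT w2:{0<..}|lborel.
        cnj (c2 w2) * c3 w2 * cnj (c1 w1) * c4 w1 *
        exp (\<i> * complex_of_real ((t3 - t2) * exp (- w1 / 2) * E w2
                 + (t4 - t1) * E w1)))"
  shows "fock_inner (cre_t t2 c2 (cre_t t1 c1 vac)) (cre_t t3 c3 (cre_t t4 c4 vac)) = M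
    \<and> Fn [(t1, c1), (t2, c2), (t3, c3), (t4, c4)]
        = M + Fn [(t1, c1), (t2, c2)] * Fn [(t3, c3), (t4, c4)]"
proof -
  have K: "(LINT x|N. LINT y|N. Kf c1 c2 c3 c4 t1 t2 t3 t4 x y) = M"
    unfolding M_def by (rule KM[OF assms(1-4)])
  show ?thesis using first_conj[OF assms(1-4)] Fn4[OF assms(1-4)] K by simp
qed

end
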